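(* Let $X$ be a compact metrizable space and let $\Delta$ be a set of Borel probability measures on $X$. The following are equivalent: (1) for any closed $V$ and open $U$ with $V\subseteq U$, there is a closed set $V'$ with $V\subseteq V'\subseteq U$ and $\mu(\partial V')=0$ for all $\mu\in\Delta$; (2) for any closed $V$ and open $U$ with $V\subseteq U$, there is an open set $V'$ with $V\subseteq V'\subseteq U$ and $\mu(\partial V')=0$ for all $\mu\in\Delta$; (3) for any $x\in X$ and any open $U\ni x$, there is a closed neighbourhood $V\subseteq U$ of $x$ with $\mu(\partial V)=0$ for all $\mu\in\Delta$; (4) for any $x\in X$ and any open $U\ni x$, there is an open neighbourhood $V\subseteq U$ of $x$ with $\mu(\partial V)=0$ for all $\mu\in\Delta$. *)

theory Defs
  imports "HOL-Probability.Probability"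
begin

definition borel_prob :: "'a::topological_space measure \<Rightarrow> bool" where
  "borel_prob \<mu> \<longleftrightarrow> sets \<mu> = sets borel \<and> prob_space \<mu>"

definition null_bdry :: "'a::topological_space measure set \<Rightarrow> 'a set \<Rightarrow> bool" where
  "null_bdry D V \<longleftrightarrow> (\<forall>\<mu>\<in>D. emeasure \<mu> (frontier V) = 0)"

definition cond1 :: "'a::topological_space measure set \<Rightarrow> bool" where
  "cond1 D \<longleftrightarrow> (\<forall>V U. closed V \<and> open U \<and> V \<subseteq> U \<longrightarrow>
      (\<exists>V'. closed V' \<and> V \<subseteq> V' \<and> V' \<subseteq> U \<and> null_bdry D V'))"

definition cond2 :: "'a::topological_space measure set \<Rightarrow> bool" where
  "cond2 D \<longleftrightarrow> (\<forall>V U. closed V \<and> open U \<and> V \<subseteq> U \<longrightarrow>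
      (\<exists>V'. open V' \<and> V \<subseteq> V' \<and> V' \<subseteq> U \<and> null_bdry D V'))"

definition cond3 :: "'a::topological_space measure set \<Rightarrow> bool" where
  "cond3 D \<longleftrightarrow> (\<forall>x U. open U \<and> x \<in> U \<longrightarrow>
      (\<exists>V. closed V \<and> x \<in> interior V \<and> V \<subseteq> U \<and> null_bdry D V))"

definition cond4 :: "'a::topological_space measure set \<Rightarrow> bool" where
  "cond4 D \<longleftrightarrow> (\<forall>x U. open U \<and> x \<in> U \<longrightarrow>
      (\<exists>V. open V \<and> x \<in> V \<and> V \<subseteq> U \<and> null_bdry D V))"

end

theory Submission
  imports Defs
begin

lemma nb_mono:
  assumes "\<forall>\<mu>\<in>D. borel_prob \<mu>" "frontier A \<subseteq> frontier B" "null_bdry D B"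
  shows "null_bdry D A"
  unfolding null_bdry_def
proof
  fix \<mu> assume m: "\<mu> \<in> D"
  have "frontier B \<in> sets \<mu>" using assms(1) m by (simp add: borel_prob_def)
  then have "emeasure \<mu> (frontier A) \<le> emeasure \<mu> (frontier B)"
    using assms(2) by (rule emeasure_mono[rotated])
  then show "emeasure \<mu> (frontier A) = 0" using assms(3) m by (simp add: null_bdry_def)
qed

lemma nb_Un:
  assumes "\<forall>\<mu>\<in>D. borel_prob \<mu>" "null_bdry D A" "null_bdry D B"
  shows "null_bdry D (A \<union> B)"
  unfolding null_bdry_def
proof
  fix \<mu> assume m: "\<mu> \<in> D"
  have s: "sets \<mu> = sets borel" using assms(1) m by (simp add: borel_prob_def)
  have "frontier A \<in> null_sets \<mu>" "frontier B \<in> null_sets \<mu>"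
    using assms(2,3) m s by (auto simp: null_bdry_def)
  then have "frontier A \<union> frontier B \<in> null_sets \<mu>" by auto
  then have "frontier (A \<union> B) \<in> null_sets \<mu>"
    using s by (intro null_sets_subset[OF _ _ frontier_Un_subset]) auto
  then show "emeasure \<mu> (frontier (A \<union> B)) = 0" by auto
qed

lemma nb_Union:
  assumes "\<forall>\<mu>\<in>D. borel_prob \<mu>" "finite F" "\<forall>A\<in>F. null_bdry D A"
  shows "null_bdry D (\<Union>F)"
  using assms(2,3)
proof (induction F rule: finite_induct)
  case empty
  then show ?case by (simp add: null_bdry_def)
next
  case (insert x F)
  then show ?case using nb_Un[OF assms(1)] by simp
qed

lemma frontier_closure_sub: "frontier (closure S) \<subseteq> frontier S"
  unfolding frontier_def using interior_mono[OF closure_subset[of S]] by auto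

lemma normal_sep:
  fixes V U :: "'a::metric_space set"
  assumes "closed V" "open U" "V \<subseteq> U"
  obtains W where "open W" "V \<subseteq> W" "closure W \<subseteq> U"
proof -
  have "closed (- U)" "V \<inter> - U = {}" using assms by auto
  then obtain A B where "open A" "open B" "V \<subseteq> A" "- U \<subseteq> B" "A \<inter> B = {}"
    using t4_space[of V "- U"] assms(1) by blast
  then have "closure A \<subseteq> - B"
    by (metis closure_minimal compl_le_swap1 disjoint_eq_subset_Compl open_closed)
  then show ?thesis using that \<open>open A\<close> \<open>V \<subseteq> A\<close> \<open>- U \<subseteq> B\<close> by blast
qed

theorem lemma2p1:
  fixes D :: "'a::metric_space measure set"
  assumes "compact (UNIV :: 'a set)"
    and "\<forall>\<mu>\<in>D. borel_prob \<mu>"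
  shows "(cond1 D \<longleftrightarrow> cond2 D) \<and> (cond2 D \<longleftrightarrow> cond3 D) \<and> (cond3 D \<longleftrightarrow> cond4 D)"
proof -
  have b: "\<forall>\<mu>\<in>D. borel_prob \<mu>" by (fact assms(2))
  have 12: "cond2 D" if c: "cond1 D"
    unfolding cond2_def
  proof (intro allI impI)
    fix V U :: "'a set" assume h: "closed V \<and> open U \<and> V \<subseteq> U"
    obtain W where W: "open W" "V \<subseteq> W" "closure W \<subseteq> U" using normal_sep h by metis
    obtain V' where V': "closed V'" "closure W \<subseteq> V'" "V' \<subseteq> U" "null_bdry D V'"
      using c W unfolding cond1_def by (meson closed_closure h)
    have "W \<subseteq> interior V'" using V' W
      by (meson closure_subset interior_maximal subset_trans)
    then show "\<exists>V'. open V' \<and> V \<subseteq> V' \<and> V' \<subseteq> U \<and> null_bdry D V'"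
      using V' W nb_mono[OF b frontier_interior_subset[of V']]
      by (meson interior_subset open_interior subset_trans)
  qed
  have 21: "cond1 D" if c: "cond2 D"
    unfolding cond1_def
  proof (intro allI impI)
    fix V U :: "'a set" assume h: "closed V \<and> open U \<and> V \<subseteq> U"
    obtain W where W: "open W" "V \<subseteq> W" "closure W \<subseteq> U" using normal_sep h by metis
    obtain V' where V': "open V'" "V \<subseteq> V'" "V' \<subseteq> W" "null_bdry D V'"
      using c W h unfolding cond2_def by meson
    have "closure V' \<subseteq> U" using V' W by (meson closure_mono subset_trans)
    then show "\<exists>V'. closed V' \<and> V \<subseteq> V' \<and> V' \<subseteq> U \<and> null_bdry D V'"
      using V' nb_mono[OF b frontier_closure_sub[of V']]
      by (meson closed_closure closure_subset subset_trans)
  qed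
  have 24: "cond4 D" if c: "cond2 D"
    unfolding cond4_def
  proof (intro allI impI)
    fix x and U :: "'a set" assume h: "open U \<and> x \<in> U"
    then show "\<exists>V. open V \<and> x \<in> V \<and> V \<subseteq> U \<and> null_bdry D V"
      using c unfolding cond2_def
      by (metis closed_singleton empty_subsetI insert_subset)
  qed
  have 34: "cond4 D" if c: "cond3 D"
    unfolding cond4_def
  proof (intro allI impI)
    fix x and U :: "'a set" assume h: "open U \<and> x \<in> U"
    then obtain V where V: "closed V" "x \<in> interior V" "V \<subseteq> U" "null_bdry D V"
      using c unfolding cond3_def by meson
    then show "\<exists>V. open V \<and> x \<in> V \<and> V \<subseteq> U \<and> null_bdry D V"
      using nb_mono[OF b frontier_interior_subset[of V]]
      by (meson interior_subset open_interior subset_trans)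
  qed
  have 43: "cond3 D" if c: "cond4 D"
    unfolding cond3_def
  proof (intro allI impI)
    fix x and U :: "'a set" assume h: "open U \<and> x \<in> U"
    obtain W where W: "open W" "{x} \<subseteq> W" "closure W \<subseteq> U" using normal_sep[of "{x}" U] h by auto
    obtain V where V: "open V" "x \<in> V" "V \<subseteq> W" "null_bdry D V"
      using c W unfolding cond4_def by (meson insert_subset)
    have "x \<in> interior (closure V)" using V
      by (meson closure_subset interior_maximal subsetD)
    moreover have "closure V \<subseteq> U" using V W by (meson closure_mono subset_trans)
    ultimately show "\<exists>V. closed V \<and> x \<in> interior V \<and> V \<subseteq> U \<and> null_bdry D V"
      using V nb_mono[OF b frontier_closure_sub[of V]] closed_closure by blast
  qed
  have 42: "cond2 D" if c: "cond4 D"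
    unfolding cond2_def
  proof (intro allI impI)
    fix V U :: "'a set" assume h: "closed V \<and> open U \<and> V \<subseteq> U"
    have "\<forall>x\<in>V. \<exists>W. open W \<and> x \<in> W \<and> W \<subseteq> U \<and> null_bdry D W"
      using c h unfolding cond4_def by blast
    then obtain f where f: "\<And>x. x \<in> V \<Longrightarrow> open (f x) \<and> x \<in> f x \<and> f x \<subseteq> U \<and> null_bdry D (f x)"
      by metis
    have cV: "compact V" using h assms(1) compact_Int_closed[of UNIV V] by simp
    obtain K where K: "K \<subseteq> V" "finite K" "V \<subseteq> \<Union>(f ` K)"
      using compactE_image[OF cV, of V f] f by blast
    have "null_bdry D (\<Union>(f ` K))"
      using nb_Union[OF b] K f by auto
    moreover have "open (\<Union>(f ` K))" using K f by auto
    moreover have "\<Union>(f ` K) \<subseteq> U" using K f by auto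
    ultimately show "\<exists>V'. open V' \<and> V \<subseteq> V' \<and> V' \<subseteq> U \<and> null_bdry D V'"
      using K by blast
  qed
  show ?thesis using 12 21 24 34 43 42 by blast
qed

end
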